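(* Let $\mathbb{H}$ be a real Hilbert space, $T\in\mathbb{B}(\mathbb{H})$ with $T\neq 0$, and fix $\epsilon\in[0,1)$. (i) The following are equivalent: (1) for every $A\in\mathbb{B}(\mathbb{H})$: $T\perp_B^{\epsilon}A$ if and only if there exists $x\in M_T$ with $|\langle Tx,Ax\rangle|\le\epsilon\|T\|\|A\|$; (2) $M_T=S_{H_0}$ for some finite dimensional subspace $H_0$ of $\mathbb{H}$, and the restriction of $T$ to $H_0^{\perp}$ satisfies $\|T|_{H_0^\perp}\|<\|T\|$. (ii) If (2) holds, then for every $A\in\mathbb{B}(\mathbb{H})$ with $M_T\subseteq M_A$: $T\perp_B^{\epsilon}A$ if and only if there exists $x\in M_T$ with $Tx\perp^{\epsilon}Ax$.
   Context: $\mathbb{B}(\mathbb{H})$ is the space of bounded linear operators on $\mathbb{H}$ with the operator norm. $S_{H_0}$ is the unit sphere of $H_0$; $M_T=\{x\in S_{\mathbb{H}}:\|Tx\|=\|T\|\}$. For $\epsilon\in[0,1)$ and $u,v$ in a normed space, $u\perp_B^{\epsilon}v$ means $\|u+\lambda v\|^2\ge\|u\|^2-2\epsilon\|u\|\|\lambda v\|$ for all $\lambda\in\mathbb{R}$ (applied here to operators with the operator norm). In an inner product space, $x\perp^{\epsilon}y$ means $|\langle x,y\rangle|\le\epsilon\|x\|\|y\|$. *)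

theory Defs
  imports "HOL-Analysis.Analysis"
begin

definition norm_attain :: "('a::real_normed_vector \<Rightarrow>\<^sub>L 'b::real_normed_vector) \<Rightarrow> 'a set" where
  "norm_attain T = {x. norm x = 1 \<and> norm (blinfun_apply T x) = norm T}"

definition bj_eps_orth :: "real \<Rightarrow> 'a::real_normed_vector \<Rightarrow> 'a \<Rightarrow> bool" where
  "bj_eps_orth eps u v \<longleftrightarrow>
     (\<forall>l::real. (norm (u + l *\<^sub>R v))\<^sup>2 \<ge> (norm u)\<^sup>2 - 2 * eps * norm u * norm (l *\<^sub>R v))"

definition inner_eps_orth :: "real \<Rightarrow> 'a::real_inner \<Rightarrow> 'a \<Rightarrow> bool" where
  "inner_eps_orth eps x y \<longleftrightarrow> \<bar>inner x y\<bar> \<le> eps * norm x * norm y"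

definition unit_sphere_of :: "'a::real_normed_vector set \<Rightarrow> 'a set" where
  "unit_sphere_of H0 = {x \<in> H0. norm x = 1}"

definition restr_norm :: "('a::real_normed_vector \<Rightarrow>\<^sub>L 'b::real_normed_vector) \<Rightarrow> 'a set \<Rightarrow> real" where
  "restr_norm T K = Sup ((\<lambda>x. norm (blinfun_apply T x)) ` {x \<in> K. norm x \<le> 1})"

definition fin_dim_subspace :: "'a::real_vector set \<Rightarrow> bool" where
  "fin_dim_subspace H0 \<longleftrightarrow> subspace H0 \<and> (\<exists>B. finite B \<and> H0 = span B)"

end

theory Submission
  imports Defs
begin


lemma norm_add_sq:
  fixes u v :: "'a::real_inner"
  shows "(norm (u + t *\<^sub>R v))^2 = (norm u)^2 + 2*t*inner u v + t^2*(norm v)^2"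
  unfolding power2_norm_eq_inner
  by (simp add: inner_add_left inner_add_right inner_commute algebra_simps power2_eq_square)

lemma key_attain:
  fixes T :: "'a::real_inner \<Rightarrow>\<^sub>L 'b::real_inner"
  assumes "x \<in> norm_attain T"
  shows "inner (T x) (T y) = (norm T)^2 * inner x y"
proof -
  have nx: "norm x = 1" and nT: "norm (T x) = norm T" using assms by (auto simp: norm_attain_def)
  define a where "a = inner (T x) (T y) - (norm T)^2 * inner x y"
  define b where "b = (norm (T y))^2 - (norm T)^2 * (norm y)^2"
  have ineq: "2*t*a + t^2*b \<le> 0" for t
  proof -
    have "norm (T (x + t *\<^sub>R y)) \<le> norm T * norm (x + t *\<^sub>R y)" by (rule norm_blinfun)
    hence "(norm (T (x + t *\<^sub>R y)))^2 \<le> (norm T * norm (x + t *\<^sub>R y))^2"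
      by (simp add: power_mono)
    moreover have "(norm (T (x + t *\<^sub>R y)))^2 = (norm T)^2 + 2*t*inner (T x) (T y) + t^2 * (norm (T y))^2"
      using nT by (simp add: blinfun.add_right blinfun.scaleR_right norm_add_sq)
    moreover have "(norm (x + t *\<^sub>R y))^2 = 1 + 2*t*inner x y + t^2*(norm y)^2"
      using nx by (simp add: norm_add_sq)
    ultimately show ?thesis by (simp add: a_def b_def algebra_simps power_mult_distrib)
  qed
  have "a = 0"
  proof (rule ccontr)
    assume a0: "a \<noteq> 0"
    define B where "B = \<bar>b\<bar> + 1"
    define t where "t = a / B"
    have p: "B > 0" by (simp add: B_def)
    have "2*t*a + t^2*b = a^2/B * (2 + b/B)"
      using p by (simp add: t_def field_simps power2_eq_square)
    moreover have "b/B > -1" using p by (simp add: field_simps B_def)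
    moreover have "a^2/B > 0" using a0 p by simp
    moreover have "2 + b/B > 0" using \<open>b/B > -1\<close> by simp
    ultimately have "2*t*a + t^2*b > 0" by (metis mult_pos_pos)
    with ineq[of t] show False by simp
  qed
  thus ?thesis by (simp add: a_def)
qed


definition Eset :: "('a::real_inner \<Rightarrow>\<^sub>L 'b::real_inner) \<Rightarrow> 'a set" where
  "Eset T = {x. \<forall>y. inner (T x) (T y) = (norm T)^2 * inner x y}"

lemma subspace_Eset: "subspace (Eset T)"
  unfolding subspace_def Eset_def
  by (auto simp: blinfun.add_right blinfun.scaleR_right inner_add_left algebra_simps)

lemma Eset_norm:
  assumes "x \<in> Eset T" shows "norm (T x) = norm T * norm x"
proof -
  have "(norm (T x))^2 = (norm T * norm x)^2"
    using assms[unfolded Eset_def] by (simp add: power2_norm_eq_inner power_mult_distrib)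
  thus ?thesis by (simp add: power2_eq_iff_nonneg)
qed

lemma attain_Eset: "norm_attain T = unit_sphere_of (Eset T)"
proof
  show "norm_attain T \<subseteq> unit_sphere_of (Eset T)"
    using key_attain by (fastforce simp: unit_sphere_of_def Eset_def norm_attain_def)
  show "unit_sphere_of (Eset T) \<subseteq> norm_attain T"
    using Eset_norm by (fastforce simp: unit_sphere_of_def norm_attain_def)
qed

definition orthonormal :: "'a::real_inner set \<Rightarrow> bool" where
  "orthonormal F \<longleftrightarrow> (\<forall>f\<in>F. norm f = 1) \<and> (\<forall>f\<in>F. \<forall>g\<in>F. f \<noteq> g \<longrightarrow> inner f g = 0)"

lemma onb_exists:
  fixes B :: "'a::real_inner set"
  assumes "finite B"
  shows "\<exists>F. finite F \<and> orthonormal F \<and> span F = span B"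
proof -
  obtain C where C: "finite C" "span C = span B" "pairwise orthogonal C"
    using basis_orthogonal[OF assms] by blast
  define F where "F = (\<lambda>x. x /\<^sub>R norm x) ` (C - {0})"
  have "finite F" using C by (simp add: F_def)
  moreover have "orthonormal F"
    unfolding orthonormal_def
  proof (intro conjI ballI impI)
    fix f assume "f \<in> F"
    then obtain x where "x \<in> C" "x \<noteq> 0" "f = x /\<^sub>R norm x" by (auto simp: F_def)
    thus "norm f = 1" by simp
  next
    fix f g assume "f \<in> F" "g \<in> F" "f \<noteq> g"
    then obtain x y where "x \<in> C" "x \<noteq> 0" "f = x /\<^sub>R norm x" "y \<in> C" "y \<noteq> 0" "g = y /\<^sub>R norm y"
      by (auto simp: F_def)
    hence "x \<noteq> y" using \<open>f \<noteq> g\<close> by auto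
    hence "inner x y = 0" using C(3) \<open>x \<in> C\<close> \<open>y \<in> C\<close> by (auto simp: pairwise_def orthogonal_def)
    thus "inner f g = 0" using \<open>f = _\<close> \<open>g = _\<close> by simp
  qed
  moreover have "span F = span C"
    unfolding span_eq
  proof
    show "F \<subseteq> span C" unfolding F_def by (auto intro: span_mul span_base)
    show "C \<subseteq> span F"
    proof
      fix c assume "c \<in> C"
      show "c \<in> span F"
      proof (cases "c = 0")
        case True thus ?thesis by (simp add: span_zero)
      next
        case False
        hence "c = norm c *\<^sub>R (c /\<^sub>R norm c)" by simp
        moreover have "c /\<^sub>R norm c \<in> F" using False \<open>c \<in> C\<close> by (auto simp: F_def)
        ultimately show ?thesis by (metis span_base span_mul)
      qed
    qed
  qed
  ultimately show ?thesis using C by auto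
qed

definition proj :: "'a::real_inner set \<Rightarrow> 'a \<Rightarrow> 'a" where
  "proj F x = (\<Sum>f\<in>F. inner f x *\<^sub>R f)"

lemma inner_proj:
  assumes "finite F" "orthonormal F" "g \<in> F"
  shows "inner g (proj F x) = inner g x"
proof -
  have "inner g (proj F x) = (\<Sum>f\<in>F. inner f x * inner g f)"
    by (simp add: proj_def inner_sum_right)
  also have "\<dots> = inner g x * inner g g + (\<Sum>f\<in>F-{g}. inner f x * inner g f)"
    using assms by (simp add: sum.remove)
  also have "(\<Sum>f\<in>F-{g}. inner f x * inner g f) = 0"
    using assms by (intro sum.neutral) (auto simp: orthonormal_def)
  also have "inner g g = 1" using assms by (simp add: orthonormal_def power2_norm_eq_inner[symmetric])
  finally show ?thesis by simp
qed

lemma proj_in_span: "proj F x \<in> span F"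
  unfolding proj_def by (intro span_sum span_mul span_base)

lemma proj_orth:
  assumes "finite F" "orthonormal F" "y \<in> span F"
  shows "inner (x - proj F x) y = 0"
proof (rule span_induct[OF assms(3)])
  show "subspace {y. inner (x - proj F x) y = 0}" by (auto simp: subspace_def inner_add_right)
next
  fix g assume "g \<in> F"
  thus "inner (x - proj F x) g = 0" using inner_proj[OF assms(1,2)] by (simp add: inner_diff_left inner_diff_right inner_commute)
qed

lemma proj_id:
  assumes "finite F" "orthonormal F" "x \<in> span F"
  shows "proj F x = x"
proof -
  have "x - proj F x \<in> span F" using assms proj_in_span span_diff by blast
  hence "inner (x - proj F x) (x - proj F x) = 0" using proj_orth[OF assms(1,2)] by blast
  thus ?thesis by simp
qed

lemma proj_orth_comp:
  assumes "finite F" "orthonormal F"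
  shows "x - proj F x \<in> orthogonal_comp (span F)"
  using proj_orth[OF assms] by (auto simp: orthogonal_comp_def orthogonal_def inner_commute)

lemma pythag:
  fixes x y :: "'a::real_inner"
  assumes "inner x y = 0"
  shows "(norm (x + y))^2 = (norm x)^2 + (norm y)^2"
  using norm_add_sq[of x 1 y] assms by simp

lemma proj_norm_le:
  assumes "finite F" "orthonormal F"
  shows "norm (proj F x) \<le> norm x"
proof -
  have "inner (proj F x) (x - proj F x) = 0"
    using proj_orth[OF assms proj_in_span] by (simp add: inner_commute)
  hence "(norm x)^2 = (norm (proj F x))^2 + (norm (x - proj F x))^2"
    using pythag[of "proj F x" "x - proj F x"] by simp
  hence "(norm (proj F x))^2 \<le> (norm x)^2" by simp
  thus ?thesis using power2_le_imp_le by fastforce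
qed

lemma bounded_linear_proj: "finite F \<Longrightarrow> orthonormal F \<Longrightarrow> bounded_linear (proj F)"
  apply (rule bounded_linear_intro[where K=1])
  apply (simp add: proj_def inner_add_right scaleR_add_left sum.distrib)
  apply (simp add: proj_def scaleR_sum_right)
  using proj_norm_le by simp



lemma compact_box:
  fixes F :: "'a::real_normed_vector set"
  assumes "finite F"
  shows "compact {(\<Sum>f\<in>F. c f *\<^sub>R f) | c. \<forall>f\<in>F. c f \<in> {-1..1}}"
  using assms
proof (induction F rule: finite_induct)
  case empty
  thus ?case by simp
next
  case (insert a F)
  let ?Z = "{(\<Sum>f\<in>F. c f *\<^sub>R f) | c. \<forall>f\<in>F. c f \<in> {-1..1}}"
  have eq: "{(\<Sum>f\<in>insert a F. c f *\<^sub>R f) | c. \<forall>f\<in>insert a F. c f \<in> {-1..1}}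
      = (\<lambda>p. fst p *\<^sub>R a + snd p) ` ({-1..1} \<times> ?Z)"
  proof (intro set_eqI iffI)
    fix x assume "x \<in> {(\<Sum>f\<in>insert a F. c f *\<^sub>R f) | c. \<forall>f\<in>insert a F. c f \<in> {-1..1}}"
    then obtain c where c: "\<forall>f\<in>insert a F. c f \<in> {-1..1}" "x = (\<Sum>f\<in>insert a F. c f *\<^sub>R f)" by blast
    hence "x = c a *\<^sub>R a + (\<Sum>f\<in>F. c f *\<^sub>R f)" using insert by simp
    moreover have "(c a, \<Sum>f\<in>F. c f *\<^sub>R f) \<in> {-1..1} \<times> ?Z" using c by auto
    ultimately show "x \<in> (\<lambda>p. fst p *\<^sub>R a + snd p) ` ({-1..1} \<times> ?Z)" by force
  next
    fix x assume "x \<in> (\<lambda>p. fst p *\<^sub>R a + snd p) ` ({-1..1} \<times> ?Z)"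
    then obtain t c where tc: "t \<in> {-1..1}" "\<forall>f\<in>F. c f \<in> {-1..1}" "x = t *\<^sub>R a + (\<Sum>f\<in>F. c f *\<^sub>R f)"
      by auto
    define c' where "c' = c(a := t)"
    have "(\<Sum>f\<in>F. c' f *\<^sub>R f) = (\<Sum>f\<in>F. c f *\<^sub>R f)"
      using insert by (intro sum.cong) (auto simp: c'_def)
    hence "x = (\<Sum>f\<in>insert a F. c' f *\<^sub>R f)" using insert tc by (simp add: c'_def)
    moreover have "\<forall>f\<in>insert a F. c' f \<in> {-1..1}" using tc by (auto simp: c'_def)
    ultimately show "x \<in> {(\<Sum>f\<in>insert a F. c f *\<^sub>R f) | c. \<forall>f\<in>insert a F. c f \<in> {-1..1}}" by blast
  qed
  show ?case unfolding eq
    by (intro compact_continuous_image compact_Times compact_Icc insert.IH continuous_intros)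
qed

lemma compact_unit_sphere_span:
  assumes "finite F" "orthonormal F"
  shows "compact (unit_sphere_of (span F))"
proof -
  have "unit_sphere_of (span F) = {(\<Sum>f\<in>F. c f *\<^sub>R f) | c. \<forall>f\<in>F. c f \<in> {-1..1}} \<inter> {x. norm x = 1}"
  proof (intro set_eqI iffI)
    fix x assume x: "x \<in> unit_sphere_of (span F)"
    hence "x = proj F x" using proj_id[OF assms] by (simp add: unit_sphere_of_def)
    moreover have "\<forall>f\<in>F. inner f x \<in> {-1..1}"
    proof
      fix f assume "f \<in> F"
      have "\<bar>inner f x\<bar> \<le> norm f * norm x" by (rule Cauchy_Schwarz_ineq2)
      thus "inner f x \<in> {-1..1}" using x \<open>f \<in> F\<close> assms(2) by (auto simp: unit_sphere_of_def orthonormal_def abs_le_iff)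
    qed
    ultimately show "x \<in> {(\<Sum>f\<in>F. c f *\<^sub>R f) | c. \<forall>f\<in>F. c f \<in> {-1..1}} \<inter> {x. norm x = 1}"
      using x unfolding proj_def unit_sphere_of_def by auto
  next
    fix x assume "x \<in> {(\<Sum>f\<in>F. c f *\<^sub>R f) | c. \<forall>f\<in>F. c f \<in> {-1..1}} \<inter> {x. norm x = 1}"
    then obtain c where "x = (\<Sum>f\<in>F. c f *\<^sub>R f)" "norm x = 1" by auto
    moreover have "(\<Sum>f\<in>F. c f *\<^sub>R f) \<in> span F" by (intro span_sum span_mul span_base)
    ultimately show "x \<in> unit_sphere_of (span F)"
      by (auto simp: unit_sphere_of_def)
  qed
  moreover have "compact ({(\<Sum>f\<in>F. c f *\<^sub>R f) | c. \<forall>f\<in>F. c f \<in> {-1..1}} \<inter> {x. norm x = 1})"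
    by (intro compact_Int_closed compact_box assms(1) closed_Collect_eq continuous_intros)
  ultimately show ?thesis by simp
qed

lemma restr_bdd:
  fixes T :: "'a::real_normed_vector \<Rightarrow>\<^sub>L 'b::real_normed_vector"
  shows   "bdd_above ((\<lambda>x. norm (blinfun_apply T x)) ` {x \<in> K. norm x \<le> 1})"
proof (rule bdd_aboveI2)
  fix x assume "x \<in> {x \<in> K. norm x \<le> 1}"
  hence "norm (T x) \<le> norm T * norm x" "norm x \<le> 1" by (auto intro: norm_blinfun)
  thus "norm (T x) \<le> norm T" by (smt (verit) mult_left_le norm_ge_zero)
qed

lemma restr_nonneg:
  fixes T :: "'a::real_normed_vector \<Rightarrow>\<^sub>L 'b::real_normed_vector"
  assumes "subspace K" shows "0 \<le> restr_norm T K"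
proof -
  have "0 \<in> {x \<in> K. norm x \<le> 1}" using assms subspace_0 by auto
  hence "norm (T 0) \<le> restr_norm T K"
    unfolding restr_norm_def by (intro cSup_upper restr_bdd imageI)
  thus ?thesis by simp
qed

lemma restr_bound:
  fixes T :: "'a::real_normed_vector \<Rightarrow>\<^sub>L 'b::real_normed_vector"
  assumes "subspace K" "x \<in> K"
  shows "norm (T x) \<le> restr_norm T K * norm x"
proof (cases "x = 0")
  case True thus ?thesis by simp
next
  case False
  define u where "u = x /\<^sub>R norm x"
  have "u \<in> {x \<in> K. norm x \<le> 1}" using assms False by (auto simp: u_def subspace_scale)
  hence "norm (T u) \<le> restr_norm T K"
    unfolding restr_norm_def by (intro cSup_upper restr_bdd imageI)
  moreover have "norm (T x) = norm x * norm (T u)"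
    using False by (simp add: u_def blinfun.scaleR_right)
  ultimately show ?thesis using False by (simp add: mult.commute mult_left_mono)
qed

lemma restr_UNIV:
  fixes T :: "'a::real_normed_vector \<Rightarrow>\<^sub>L 'b::real_normed_vector"
  shows "norm T \<le> restr_norm T UNIV"
  by (rule norm_blinfun_bound) (auto intro: restr_nonneg restr_bound subspace_UNIV)

lemma real_ineq:
  fixes k m d C a q l :: real
  assumes "k>0" "m>0" "d>0" "C\<ge>0" "0\<le>q" "l>0" "l \<le> k/(4*m)" "l*(18*C^2/k + a^2 + 1) \<le> d"
  shows "k*q^2 - 2*l*m*q^2 - 6*l*C*q + l*d - l^2*a^2 \<ge> 0"
proof -
  have "l*(4*m) \<le> k" using assms by (simp add: field_simps)
  hence "2*l*m \<le> k/2" by simp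
  hence h1: "k*q^2 - 2*l*m*q^2 \<ge> (k/2)*q^2"
    using mult_right_mono[of "2*l*m" "k/2" "q^2"] by (simp add: algebra_simps)
  have "(k/2)*q^2 - 6*l*C*q + 18*l^2*C^2/k = (k/2)*(q - 6*l*C/k)^2"
    using assms by (simp add: field_simps power2_eq_square)
  moreover have "(k/2)*(q - 6*l*C/k)^2 \<ge> 0" using assms by simp
  ultimately have h2: "(k/2)*q^2 - 6*l*C*q + 18*l^2*C^2/k \<ge> 0" by simp
  have "l*(l*(18*C^2/k + a^2 + 1)) \<le> l*d" using assms by (intro mult_left_mono) auto
  hence h3: "l*d \<ge> 18*l^2*C^2/k + l^2*a^2 + l^2" by (simp add: algebra_simps power2_eq_square)
  have "l^2 \<ge> 0" by simp
  show ?thesis using h1 h2 h3 \<open>l^2 \<ge> 0\<close> by linarith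
qed



lemma span_sub_Eset:
  fixes T :: "'a::real_inner \<Rightarrow>\<^sub>L 'b::real_inner"
  assumes "norm_attain T = unit_sphere_of (span F)"
  shows "span F \<subseteq> Eset T"
proof
  fix x assume x: "x \<in> span F"
  show "x \<in> Eset T"
  proof (cases "x = 0")
    case True thus ?thesis using subspace_Eset subspace_0 by blast
  next
    case False
    define u where "u = x /\<^sub>R norm x"
    have "u \<in> unit_sphere_of (span F)" using x False by (auto simp: u_def unit_sphere_of_def span_mul)
    hence "u \<in> Eset T" using assms attain_Eset by (auto simp: unit_sphere_of_def)
    moreover have "x = norm x *\<^sub>R u" using False by (simp add: u_def)
    ultimately show ?thesis by (metis subspace_Eset subspace_scale)
  qed
qed

lemma dir21_pos:
  fixes T A :: "'a::real_inner \<Rightarrow>\<^sub>L 'a"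
  assumes T0: "T \<noteq> 0" and eps: "0 \<le> eps"
    and F: "finite F" "orthonormal F"
    and MT: "norm_attain T = unit_sphere_of (span F)"
    and r: "restr_norm T (orthogonal_comp (span F)) < norm T"
    and pos: "\<forall>x\<in>norm_attain T. inner (T x) (A x) > eps * norm T * norm A"
  shows "\<not> bj_eps_orth eps T A"
proof
  assume bj: "bj_eps_orth eps T A"
  define N where "N = norm T"
  define R where "R = restr_norm T (orthogonal_comp (span F))"
  define a where "a = norm A"
  define c where "c = eps * N * a"
  define C where "C = N * a"
  define g where "g = (\<lambda>x. inner (T x) (A x))"
  have N0: "N > 0" using T0 by (simp add: N_def)
  have a0: "a \<ge> 0" by (simp add: a_def)
  have c0: "c \<ge> 0" using eps N0 a0 by (simp add: c_def)
  have C0: "C \<ge> 0" using N0 a0 by (simp add: C_def)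
  have sub: "subspace (orthogonal_comp (span F))" by (rule subspace_orthogonal_comp)
  have R0: "R \<ge> 0" unfolding R_def by (rule restr_nonneg[OF sub])
  have RN: "R < N" using r by (simp add: R_def N_def)
  have Fne: "F \<noteq> {}"
  proof
    assume "F = {}"
    hence "orthogonal_comp (span F) = UNIV" by simp
    thus False using r restr_UNIV[of T] by simp
  qed
  then obtain f0 where f0: "f0 \<in> F" by blast
  have f0u: "norm f0 = 1" using F f0 by (simp add: orthonormal_def)
  have Mne: "unit_sphere_of (span F) \<noteq> {}"
    using f0 f0u by (auto simp: unit_sphere_of_def intro: span_base)
  have "continuous_on (unit_sphere_of (span F)) g"
    unfolding g_def by (intro continuous_intros)
  then obtain x0 where x0: "x0 \<in> unit_sphere_of (span F)" "\<And>y. y \<in> unit_sphere_of (span F) \<Longrightarrow> g x0 \<le> g y"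
    using continuous_attains_inf[OF compact_unit_sphere_span[OF F] Mne] by blast
  define m where "m = g x0"
  have mc: "m > c" using pos x0(1) MT by (simp add: m_def g_def c_def N_def a_def)
  have m0: "m > 0" using mc c0 by simp
  define d where "d = m - c"
  have d0: "d > 0" using mc by (simp add: d_def)
  have gquad: "g x \<ge> m * (norm x)^2" if "x \<in> span F" for x
  proof (cases "x = 0")
    case True thus ?thesis by (simp add: g_def)
  next
    case False
    define u where "u = x /\<^sub>R norm x"
    have "u \<in> unit_sphere_of (span F)" using that False by (auto simp: u_def unit_sphere_of_def span_mul)
    hence "m \<le> g u" using x0 by (simp add: m_def)
    moreover have "g x = (norm x)^2 * g u"
      using False by (simp add: u_def g_def blinfun.scaleR_right power2_eq_square field_simps)
    ultimately show ?thesis by (metis mult.commute mult_right_mono zero_le_power2)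
  qed
  have spanE: "span F \<subseteq> Eset T" by (rule span_sub_Eset[OF MT])
  define k where "k = N^2 - R^2"
  have k0: "k > 0" using RN R0 by (simp add: k_def power_strict_mono)
  define l where "l = min (k/(4*m)) (d / (18*C^2/k + a^2 + 1))"
  have den: "18*C^2/k + a^2 + 1 > 0" using k0 by (simp add: add_nonneg_pos)
  have l0: "l > 0" using k0 m0 d0 den by (simp add: l_def)
  have l1: "l \<le> k/(4*m)" by (simp add: l_def)
  have l2: "l*(18*C^2/k + a^2 + 1) \<le> d"
  proof -
    have "l \<le> d / (18*C^2/k + a^2 + 1)" by (simp add: l_def)
    thus ?thesis using den by (simp add: pos_le_divide_eq)
  qed
  define K where "K = N^2 - 2*l*c - l*d"
  have unit_est: "(norm ((T - l *\<^sub>R A) z))^2 \<le> K" if z: "norm z = 1" for z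
  proof -
    define x where "x = proj F z"
    define y where "y = z - x"
    define q where "q = norm y"
    have xs: "x \<in> span F" by (simp add: x_def proj_in_span)
    have yo: "y \<in> orthogonal_comp (span F)" using proj_orth_comp[OF F] by (simp add: y_def x_def)
    have xy: "inner x y = 0" using yo xs by (auto simp: orthogonal_comp_def orthogonal_def)
    have zxy: "z = x + y" by (simp add: y_def)
    have sq: "(norm x)^2 + q^2 = 1" using pythag[OF xy] z zxy q_def by simp
    have q0: "q \<ge> 0" by (simp add: q_def)
    have nxq: "(norm x)^2 = 1 - q^2" using sq by simp
    have "q^2 \<le> 1" using sq zero_le_power2[of "norm x"] by linarith
    hence q1: "q \<le> 1" using power2_le_imp_le[of q 1] by simp
    have "(norm x)^2 \<le> 1" using sq zero_le_power2[of q] by linarith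
    hence nx1: "norm x \<le> 1" using power2_le_imp_le[of "norm x" 1] by simp
    have xE: "x \<in> Eset T" using spanE xs by blast
    have TxTy: "inner (T x) (T y) = 0" using xE xy by (simp add: Eset_def)
    have nTx: "norm (T x) = N * norm x" using Eset_norm[OF xE] by (simp add: N_def)
    have nTy: "norm (T y) \<le> R * q" using restr_bound[OF sub yo] by (simp add: R_def q_def)
    have "(norm (T z))^2 = (norm (T x))^2 + (norm (T y))^2"
      using pythag[OF TxTy] by (simp add: zxy blinfun.add_right)
    also have "\<dots> \<le> N^2 * (norm x)^2 + R^2 * q^2"
      using nTx power_mono[OF nTy norm_ge_zero] by (simp add: power_mult_distrib)
    also have "\<dots> = N^2 - k * q^2" unfolding nxq by (simp add: k_def algebra_simps)
    finally have P1: "(norm (T z))^2 \<le> N^2 - k * q^2" .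
    have e1: "\<bar>inner (T x) (A y)\<bar> \<le> C * q"
    proof -
      have "\<bar>inner (T x) (A y)\<bar> \<le> norm (T x) * norm (A y)" by (rule Cauchy_Schwarz_ineq2)
      also have "\<dots> \<le> N * (a * q)"
      proof (intro mult_mono)
        show "norm (T x) \<le> N" using nTx nx1 N0 by (simp add: mult_left_le)
        show "norm (A y) \<le> a * q" unfolding a_def q_def by (rule norm_blinfun)
      qed (auto simp: N0 less_imp_le)
      finally show ?thesis by (simp add: C_def mult.assoc)
    qed
    have e2: "\<bar>inner (T y) (A x)\<bar> \<le> C * q"
    proof -
      have "\<bar>inner (T y) (A x)\<bar> \<le> norm (T y) * norm (A x)" by (rule Cauchy_Schwarz_ineq2)
      also have "\<dots> \<le> (N * q) * a"
      proof (intro mult_mono)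
        show "norm (T y) \<le> N * q" unfolding N_def q_def by (rule norm_blinfun)
        have "norm (A x) \<le> a * norm x" unfolding a_def by (rule norm_blinfun)
        also have "\<dots> \<le> a" using nx1 a0 by (simp add: mult_left_le)
        finally show "norm (A x) \<le> a" .
      qed (auto simp: N0 q0 less_imp_le)
      finally show ?thesis by (simp add: C_def algebra_simps)
    qed
    have e3: "\<bar>inner (T y) (A y)\<bar> \<le> C * q"
    proof -
      have "\<bar>inner (T y) (A y)\<bar> \<le> norm (T y) * norm (A y)" by (rule Cauchy_Schwarz_ineq2)
      also have "\<dots> \<le> (N * q) * (a * q)"
        by (intro mult_mono norm_blinfun[of T y, folded N_def q_def] norm_blinfun[of A y, folded a_def q_def]) (auto simp: N0 q0 less_imp_le)
      also have "\<dots> = C * q * q" by (simp add: C_def algebra_simps)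
      also have "\<dots> \<le> C * q" using q1 q0 C0 by (simp add: mult_left_le)
      finally show ?thesis .
    qed
    have gx: "g x \<ge> m - m * q^2" using gquad[OF xs] unfolding nxq by (simp add: algebra_simps)
    have "g z = g x + inner (T x) (A y) + inner (T y) (A x) + inner (T y) (A y)"
      by (simp add: g_def zxy blinfun.add_right inner_add_left inner_add_right)
    hence P2: "g z \<ge> m - m * q^2 - 3 * C * q" using gx e1 e2 e3 by linarith
    have P3: "(norm (A z))^2 \<le> a^2"
    proof -
      have "norm (A z) \<le> a" using norm_blinfun[of A z] z by (simp add: a_def)
      thus ?thesis by (simp add: power_mono)
    qed
    have Q: "(norm ((T - l *\<^sub>R A) z))^2 = (norm (T z))^2 - 2*l*g z + l^2 * (norm (A z))^2"
    proof -
      have "(T - l *\<^sub>R A) z = T z + (-l) *\<^sub>R A z"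
        by (simp add: blinfun.diff_left blinfun.scaleR_left)
      thus ?thesis using norm_add_sq[of "T z" "-l" "A z"] by (simp add: g_def)
    qed
    have "l * g z \<ge> l * (m - m * q^2 - 3 * C * q)" using P2 l0 by (simp add: mult_left_mono)
    hence m1: "l * g z \<ge> l*m - l*m*q^2 - 3*l*C*q" by (simp add: algebra_simps)
    have m2: "l^2 * (norm (A z))^2 \<le> l^2 * a^2" using P3 by (simp add: mult_left_mono)
    have ri: "k*q^2 - 2*l*m*q^2 - 6*l*C*q + l*d - l^2*a^2 \<ge> 0"
      by (rule real_ineq[OF k0 m0 d0 C0 q0 l0 l1 l2])
    have cd: "c = m - d" by (simp add: d_def)
    have Keq: "K = N^2 - 2*l*m + l*d" by (simp add: K_def cd algebra_simps)
    have "2*l*m*q^2 = 2*(l*m*q^2)" "6*l*C*q = 2*(3*l*C*q)" "2*l*g z = 2*(l*g z)" by simp_all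
    thus ?thesis unfolding Q Keq using P1 m1 m2 ri by linarith
  qed
  have K0: "K \<ge> 0" using unit_est[OF f0u] zero_le_power2[of "norm ((T - l *\<^sub>R A) f0)"] by linarith
  have "norm (T - l *\<^sub>R A) \<le> sqrt K"
  proof (rule norm_blinfun_bound)
    show "0 \<le> sqrt K" using K0 by simp
    fix z
    show "norm ((T - l *\<^sub>R A) z) \<le> sqrt K * norm z"
    proof (cases "z = 0")
      case True thus ?thesis by simp
    next
      case False
      define u where "u = z /\<^sub>R norm z"
      have "norm u = 1" using False by (simp add: u_def)
      hence "norm ((T - l *\<^sub>R A) u) \<le> sqrt K" using unit_est real_le_rsqrt by blast
      moreover have "(T - l *\<^sub>R A) z = norm z *\<^sub>R (T - l *\<^sub>R A) u"
        using False by (simp add: u_def blinfun.scaleR_right)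
      ultimately show ?thesis using mult_right_mono[of "norm ((T - l *\<^sub>R A) u)" "sqrt K" "norm z"]
        by (simp add: mult.commute)
    qed
  qed
  hence "(norm (T - l *\<^sub>R A))^2 \<le> K"
    by (metis K0 norm_ge_zero power_mono real_sqrt_pow2)
  moreover have "(norm (T + (-l) *\<^sub>R A))^2 \<ge> (norm T)^2 - 2 * eps * norm T * norm ((-l) *\<^sub>R A)"
    using bj[unfolded bj_eps_orth_def, rule_format, of "-l"] by blast
  moreover have "norm ((-l) *\<^sub>R A) = l * a" using l0 by (simp add: a_def)
  moreover have "T + (-l) *\<^sub>R A = T - l *\<^sub>R A" by simp
  ultimately have "N^2 - 2*eps*N*(l*a) \<le> K" unfolding N_def by simp
  hence "N^2 - 2*l*c \<le> K" by (simp add: c_def algebra_simps)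
  thus False using mult_pos_pos[OF l0 d0] by (simp add: K_def)
qed



lemma bj_from_x:
  fixes T A :: "'a::real_inner \<Rightarrow>\<^sub>L 'a"
  assumes x: "x \<in> norm_attain T" and g: "\<bar>inner (T x) (A x)\<bar> \<le> eps * norm T * norm A"
  shows "bj_eps_orth eps T A"
  unfolding bj_eps_orth_def
proof
  fix l :: real
  have nx: "norm x = 1" "norm (T x) = norm T" using x by (auto simp: norm_attain_def)
  have "(T + l *\<^sub>R A) x = T x + l *\<^sub>R A x" by (simp add: blinfun.add_left blinfun.scaleR_left)
  hence e: "(norm ((T + l *\<^sub>R A) x))^2 = (norm T)^2 + 2*(l*inner (T x) (A x)) + l^2*(norm (A x))^2"
    using norm_add_sq[of "T x" l "A x"] nx by (simp add: mult.assoc)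
  have "\<bar>l * inner (T x) (A x)\<bar> \<le> \<bar>l\<bar> * (eps * norm T * norm A)"
    unfolding abs_mult using g by (simp add: mult_left_mono)
  hence lg: "l * inner (T x) (A x) \<ge> - (\<bar>l\<bar> * (eps * norm T * norm A))" by linarith
  have "norm ((T + l *\<^sub>R A) x) \<le> norm (T + l *\<^sub>R A)"
    using norm_blinfun[of "T + l *\<^sub>R A" x] nx by simp
  hence "(norm ((T + l *\<^sub>R A) x))^2 \<le> (norm (T + l *\<^sub>R A))^2" by (simp add: power_mono)
  moreover have "l^2*(norm (A x))^2 \<ge> 0" by simp
  moreover have "norm (l *\<^sub>R A) = \<bar>l\<bar> * norm A" by simp
  ultimately have "(norm T)^2 - 2*(\<bar>l\<bar> * (eps * norm T * norm A)) \<le> (norm (T + l *\<^sub>R A))\<^sup>2"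
    using e lg by linarith
  moreover have "2 * eps * norm T * norm (l *\<^sub>R A) = 2*(\<bar>l\<bar> * (eps * norm T * norm A))" by simp
  ultimately show "(norm T)\<^sup>2 - 2 * eps * norm T * norm (l *\<^sub>R A) \<le> (norm (T + l *\<^sub>R A))\<^sup>2"
    by linarith
qed

lemma bj_neg:
  fixes T A :: "'a::real_inner \<Rightarrow>\<^sub>L 'a"
  assumes "bj_eps_orth eps T A" shows "bj_eps_orth eps T (- A)"
  unfolding bj_eps_orth_def
proof
  fix l :: real
  have "(norm T)\<^sup>2 - 2 * eps * norm T * norm ((-l) *\<^sub>R A) \<le> (norm (T + (-l) *\<^sub>R A))\<^sup>2"
    using assms[unfolded bj_eps_orth_def, rule_format, of "-l"] by blast
  moreover have "(-l) *\<^sub>R A = l *\<^sub>R (- A)" by simp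
  ultimately show "(norm T)\<^sup>2 - 2 * eps * norm T * norm (l *\<^sub>R (-A)) \<le> (norm (T + l *\<^sub>R (-A)))\<^sup>2"
    by simp
qed

lemma dir21:
  fixes T A :: "'a::real_inner \<Rightarrow>\<^sub>L 'a"
  assumes T0: "T \<noteq> 0" and eps: "0 \<le> eps"
    and fin: "fin_dim_subspace H0"
    and MT: "norm_attain T = unit_sphere_of H0"
    and r: "restr_norm T (orthogonal_comp H0) < norm T"
    and bj: "bj_eps_orth eps T A"
  shows "\<exists>x\<in>norm_attain T. \<bar>inner (T x) (A x)\<bar> \<le> eps * norm T * norm A"
proof (rule ccontr)
  assume nx: "\<not> ?thesis"
  obtain B where B: "finite B" "H0 = span B" using fin by (auto simp: fin_dim_subspace_def)
  obtain F where F: "finite F" "orthonormal F" "span F = span B" using onb_exists[OF B(1)] by blast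
  have MT': "norm_attain T = unit_sphere_of (span F)" using MT B F by simp
  have r': "restr_norm T (orthogonal_comp (span F)) < norm T" using r B F by simp
  define c where "c = eps * norm T * norm A"
  define g where "g = (\<lambda>x. inner (T x) (A x))"
  have c0: "c \<ge> 0" using eps by (simp add: c_def)
  have all: "\<forall>x\<in>norm_attain T. \<bar>g x\<bar> > c" using nx by (auto simp: g_def c_def not_le)
  have sign: "(\<forall>x\<in>norm_attain T. g x > c) \<or> (\<forall>x\<in>norm_attain T. g x < -c)"
  proof (rule ccontr)
    assume "\<not> ?thesis"
    then obtain x1 x2 where x1: "x1 \<in> norm_attain T" "g x1 \<le> c" and x2: "x2 \<in> norm_attain T" "g x2 \<ge> -c"
      by (auto simp: not_less)
    have g1: "g x1 < 0" using all x1 c0 by force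
    have g2: "g x2 > 0" using all x2 c0 by force
    define h where "h = (\<lambda>t::real. g ((1 - t) *\<^sub>R x1 + t *\<^sub>R x2))"
    have "continuous_on {0..1} h" unfolding h_def g_def by (intro continuous_intros)
    moreover have "h 0 \<le> 0" "0 \<le> h 1" using g1 g2 by (simp_all add: h_def)
    ultimately obtain t where t: "0 \<le> t" "t \<le> 1" "h t = 0" using IVT'[of h 0 0 1] by auto
    define v where "v = (1 - t) *\<^sub>R x1 + t *\<^sub>R x2"
    have x1s: "x1 \<in> span F" and x2s: "x2 \<in> span F" using x1 x2 MT' by (auto simp: unit_sphere_of_def)
    have vs: "v \<in> span F" unfolding v_def using x1s x2s by (intro span_add span_mul)
    have gv: "g v = 0" using t by (simp add: h_def v_def)
    show False
    proof (cases "v = 0")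
      case False
      define u where "u = v /\<^sub>R norm v"
      have "u \<in> norm_attain T" using vs False MT' by (auto simp: u_def unit_sphere_of_def span_mul)
      moreover have "g u = 0" using gv by (simp add: u_def g_def blinfun.scaleR_right)
      ultimately show False using all c0 by force
    next
      case True
      have "t \<noteq> 0" using True x1 by (auto simp: v_def norm_attain_def)
      have "t *\<^sub>R x2 = - ((1 - t) *\<^sub>R x1)" using True by (simp add: v_def eq_neg_iff_add_eq_0 add.commute)
      hence "(1/t) *\<^sub>R (t *\<^sub>R x2) = (1/t) *\<^sub>R (- ((1 - t) *\<^sub>R x1))" by simp
      hence "x2 = - (((1 - t) / t) *\<^sub>R x1)" using \<open>t \<noteq> 0\<close> by simp
      hence "g x2 = ((1 - t)/t)^2 * g x1" by (simp add: g_def blinfun.minus_right blinfun.scaleR_right power2_eq_square)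
      moreover have "((1 - t)/t)^2 * g x1 \<le> 0" using g1 by (simp add: mult_nonneg_nonpos)
      ultimately show False using g2 by simp
    qed
  qed
  thus False
  proof
    assume "\<forall>x\<in>norm_attain T. g x > c"
    hence "\<not> bj_eps_orth eps T A"
      by (intro dir21_pos[OF T0 eps F(1) F(2) MT' r']) (simp add: g_def c_def)
    thus False using bj by simp
  next
    assume neg: "\<forall>x\<in>norm_attain T. g x < -c"
    have "\<forall>x\<in>norm_attain T. inner (T x) ((-A) x) > eps * norm T * norm (-A)"
      using neg by (auto simp: g_def c_def blinfun.minus_left less_minus_iff)
    hence "\<not> bj_eps_orth eps T (-A)"
      by (intro dir21_pos[OF T0 eps F(1) F(2) MT' r'])
    thus False using bj_neg[OF bj] by simp
  qed
qed

lemma caseA: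
  fixes T :: "'a::real_inner \<Rightarrow>\<^sub>L 'a"
  assumes T0: "T \<noteq> 0" and eps: "0 \<le> eps" "eps < 1"
    and F: "finite F" "orthonormal F"
    and EF: "Eset T = span F"
    and r: "\<not> restr_norm T (orthogonal_comp (span F)) < norm T"
  shows "\<exists>A. bj_eps_orth eps T A \<and> \<not> (\<exists>x\<in>norm_attain T. \<bar>inner (T x) (A x)\<bar> \<le> eps * norm T * norm A)"
proof -
  have bl: "bounded_linear (\<lambda>z. T (proj F z))"
    by (rule bounded_linear_compose[OF blinfun.bounded_linear_right bounded_linear_proj[OF F]])
  define A where "A = Blinfun (\<lambda>z. T (proj F z))"
  have Aap: "A z = T (proj F z)" for z using bl by (simp add: A_def bounded_linear_Blinfun_apply)
  have N0: "norm T > 0" using T0 by simp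
  have nA: "norm A \<le> norm T"
  proof (rule norm_blinfun_bound)
    fix z
    have "norm (A z) \<le> norm T * norm (proj F z)" unfolding Aap by (rule norm_blinfun)
    also have "\<dots> \<le> norm T * norm z" using proj_norm_le[OF F] by (simp add: mult_left_mono)
    finally show "norm (A z) \<le> norm T * norm z" .
  qed simp
  have proj0: "proj F y = 0" if "y \<in> orthogonal_comp (span F)" for y
  proof -
    have "\<forall>f\<in>F. inner f y = 0" using that by (auto simp: orthogonal_comp_def orthogonal_def intro: span_base)
    thus ?thesis by (simp add: proj_def)
  qed
  have bj: "bj_eps_orth eps T A"
    unfolding bj_eps_orth_def
  proof
    fix l :: real
    let ?S = "{x \<in> orthogonal_comp (span F). norm x \<le> 1}"
    have "0 \<in> ?S" by (simp add: orthogonal_comp_def orthogonal_def)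
    hence ne: "?S \<noteq> {}" by blast
    have "restr_norm T (orthogonal_comp (span F)) \<le> norm (T + l *\<^sub>R A)"
      unfolding restr_norm_def
    proof (rule cSup_least)
      show "(\<lambda>x. norm (T x)) ` ?S \<noteq> {}" using ne by simp
      fix v assume "v \<in> (\<lambda>x. norm (T x)) ` ?S"
      then obtain y where y: "y \<in> orthogonal_comp (span F)" "norm y \<le> 1" "v = norm (T y)" by auto
      have "(T + l *\<^sub>R A) y = T y" using proj0[OF y(1)] by (simp add: blinfun.add_left blinfun.scaleR_left Aap)
      hence "norm (T y) \<le> norm (T + l *\<^sub>R A) * norm y" by (metis norm_blinfun)
      also have "\<dots> \<le> norm (T + l *\<^sub>R A)" using y(2) by (simp add: mult_left_le)
      finally show "v \<le> norm (T + l *\<^sub>R A)" using y(3) by simp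
    qed
    hence "norm T \<le> norm (T + l *\<^sub>R A)" using r by simp
    hence "(norm T)^2 \<le> (norm (T + l *\<^sub>R A))^2" by (simp add: power_mono)
    moreover have "2 * eps * norm T * norm (l *\<^sub>R A) \<ge> 0" using eps by simp
    ultimately show "(norm T)\<^sup>2 - 2 * eps * norm T * norm (l *\<^sub>R A) \<le> (norm (T + l *\<^sub>R A))\<^sup>2" by linarith
  qed
  have "\<not> (\<exists>x\<in>norm_attain T. \<bar>inner (T x) (A x)\<bar> \<le> eps * norm T * norm A)"
  proof
    assume "\<exists>x\<in>norm_attain T. \<bar>inner (T x) (A x)\<bar> \<le> eps * norm T * norm A"
    then obtain x where x: "x \<in> norm_attain T" "\<bar>inner (T x) (A x)\<bar> \<le> eps * norm T * norm A" by blast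
    have "x \<in> span F" using x(1) attain_Eset EF by (auto simp: unit_sphere_of_def)
    hence "A x = T x" using proj_id[OF F] by (simp add: Aap)
    moreover have "norm (T x) = norm T" using x(1) by (simp add: norm_attain_def)
    ultimately have "inner (T x) (A x) = (norm T)^2" by (simp add: power2_norm_eq_inner[symmetric])
    hence "(norm T)^2 \<le> eps * norm T * norm A" using x(2) by simp
    also have "\<dots> \<le> eps * norm T * norm T" using nA eps N0 by (simp add: mult_left_mono)
    also have "\<dots> < (norm T)^2" using eps N0 by (simp add: power2_eq_square)
    finally show False by simp
  qed
  thus ?thesis using bj by blast
qed



definition ONS :: "(nat \<Rightarrow> 'a::real_inner) \<Rightarrow> bool" where
  "ONS e \<longleftrightarrow> (\<forall>n. norm (e n) = 1) \<and> (\<forall>m n. m \<noteq> n \<longrightarrow> inner (e m) (e n) = 0)"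

lemma ONS_inner: "ONS e \<Longrightarrow> inner (e n) (e m) = (if n = m then 1 else 0)"
  by (auto simp: ONS_def power2_norm_eq_inner[symmetric])

lemma fsum_inner:
  assumes "ONS e" "finite I"
  shows "inner (\<Sum>n\<in>I. c n *\<^sub>R e n) (e m) = (if m \<in> I then c m else 0)"
proof -
  have "inner (\<Sum>n\<in>I. c n *\<^sub>R e n) (e m) = (\<Sum>n\<in>I. (if n = m then c n else 0))"
    unfolding inner_sum_left using ONS_inner[OF assms(1)] by (intro sum.cong) auto
  thus ?thesis using assms(2) by (simp add: sum.delta')
qed

lemma fsum_norm2:
  assumes "ONS e" "finite I"
  shows "(norm (\<Sum>n\<in>I. c n *\<^sub>R e n))^2 = (\<Sum>n\<in>I. (c n)^2)"
proof -
  have "(norm (\<Sum>n\<in>I. c n *\<^sub>R e n))^2 = (\<Sum>n\<in>I. c n * inner (e n) (\<Sum>k\<in>I. c k *\<^sub>R e k))"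
    by (simp add: power2_norm_eq_inner inner_sum_left)
  also have "\<dots> = (\<Sum>n\<in>I. (c n)^2)"
    using fsum_inner[OF assms] by (intro sum.cong) (auto simp: inner_commute power2_eq_square)
  finally show ?thesis .
qed

lemma bessel_fin:
  assumes "ONS e"
  shows "(\<Sum>n<N. (inner (e n) x)^2) \<le> (norm x)^2"
proof -
  define S where "S = (\<Sum>n<N. inner (e n) x *\<^sub>R e n)"
  have nS: "(norm S)^2 = (\<Sum>n<N. (inner (e n) x)^2)" unfolding S_def by (rule fsum_norm2[OF assms]) simp
  have iS: "inner x S = (\<Sum>n<N. (inner (e n) x)^2)"
    by (simp add: S_def inner_sum_right inner_commute power2_eq_square)
  have "0 \<le> (norm (x + (-1) *\<^sub>R S))^2" by simp
  also have "\<dots> = (norm x)^2 - 2 * inner x S + (norm S)^2" using norm_add_sq[of x "-1" S] by simp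
  finally show ?thesis using nS iS by simp
qed

lemma bessel:
  assumes "ONS e"
  shows "summable (\<lambda>n. (inner (e n) x)^2)" "(\<Sum>n. (inner (e n) x)^2) \<le> (norm x)^2"
proof -
  show s: "summable (\<lambda>n. (inner (e n) x)^2)"
    by (rule summableI_nonneg_bounded[where x="(norm x)^2"]) (auto intro: bessel_fin[OF assms])
  show "(\<Sum>n. (inner (e n) x)^2) \<le> (norm x)^2"
    by (rule suminf_le_const[OF s]) (rule bessel_fin[OF assms])
qed

lemma ons_summable:
  fixes e :: "nat \<Rightarrow> 'a::{real_inner, complete_space}"
  assumes e: "ONS e" and c: "summable (\<lambda>n. (c n)^2)"
  shows "summable (\<lambda>n. c n *\<^sub>R e n)"
proof -
  have "Cauchy (\<lambda>n. \<Sum>i<n. c i *\<^sub>R e i)"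
  proof (rule CauchyI)
    fix r :: real assume r: "r > 0"
    obtain M where M: "\<forall>m\<ge>M. \<forall>n. norm (sum (\<lambda>n. (c n)^2) {m..<n}) < r^2"
      using c[unfolded summable_Cauchy] r by (meson zero_less_power)
    have key: "norm ((\<Sum>i<n. c i *\<^sub>R e i) - (\<Sum>i<m. c i *\<^sub>R e i)) < r" if "M \<le> m" "m \<le> n" for m n
    proof -
      have "(\<Sum>i<n. c i *\<^sub>R e i) - (\<Sum>i<m. c i *\<^sub>R e i) = (\<Sum>i\<in>{m..<n}. c i *\<^sub>R e i)"
        using sum_diff_nat_ivl[of 0 m n "\<lambda>i. c i *\<^sub>R e i"] that by (simp add: atLeast0LessThan)
      moreover have "(norm (\<Sum>i\<in>{m..<n}. c i *\<^sub>R e i))^2 = (\<Sum>i\<in>{m..<n}. (c i)^2)"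
        by (rule fsum_norm2[OF e]) simp
      moreover have "(\<Sum>i\<in>{m..<n}. (c i)^2) < r^2"
        using M[rule_format, of m n] that by (simp add: abs_less_iff)
      ultimately have "(norm ((\<Sum>i<n. c i *\<^sub>R e i) - (\<Sum>i<m. c i *\<^sub>R e i)))^2 < r^2" by simp
      thus ?thesis by (rule power_less_imp_less_base) (use r in simp)
    qed
    show "\<exists>M. \<forall>m\<ge>M. \<forall>n\<ge>M. norm ((\<Sum>i<m. c i *\<^sub>R e i) - (\<Sum>i<n. c i *\<^sub>R e i)) < r"
    proof (intro exI allI impI)
      fix m n assume "M \<le> m" "M \<le> n"
      show "norm ((\<Sum>i<m. c i *\<^sub>R e i) - (\<Sum>i<n. c i *\<^sub>R e i)) < r"
      proof (cases "m \<le> n")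
        case True thus ?thesis using key[of m n] \<open>M \<le> m\<close> by (simp add: norm_minus_commute)
      next
        case False thus ?thesis using key[of n m] \<open>M \<le> n\<close> by simp
      qed
    qed
  qed
  thus ?thesis by (simp add: summable_iff_convergent Cauchy_convergent_iff)
qed

lemma sq_le_lemma:
  fixes w a :: real
  assumes "\<bar>w\<bar> \<le> 1"
  shows "(w * a)^2 \<le> a^2"
proof -
  have "(w)^2 \<le> 1" using power_mono[OF assms, of 2] by simp
  hence "(w)^2 * a^2 \<le> 1 * a^2" by (intro mult_right_mono) auto
  thus ?thesis by (simp add: power_mult_distrib)
qed

definition Pw :: "(nat \<Rightarrow> real) \<Rightarrow> (nat \<Rightarrow> 'a::real_inner) \<Rightarrow> 'a \<Rightarrow> 'a" where
  "Pw w e x = (\<Sum>n. (w n * inner (e n) x) *\<^sub>R e n)"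

lemma Pw_summable:
  fixes e :: "nat \<Rightarrow> 'a::{real_inner, complete_space}"
  assumes e: "ONS e" and w: "\<And>n. \<bar>w n\<bar> \<le> 1"
  shows "summable (\<lambda>n. (w n * inner (e n) x) *\<^sub>R e n)"
proof (rule ons_summable[OF e])
  show "summable (\<lambda>n. (w n * inner (e n) x)^2)"
  proof (rule summable_comparison_test'[OF bessel(1)[OF e, where x=x]])
    fix n :: nat
    show "norm ((w n * inner (e n) x)^2) \<le> (inner (e n) x)^2" using sq_le_lemma[OF w[of n]] by simp
  qed
qed

lemma Pw_inner:
  fixes e :: "nat \<Rightarrow> 'a::{real_inner, complete_space}"
  assumes e: "ONS e" and w: "\<And>n. \<bar>w n\<bar> \<le> 1"
  shows "inner (Pw w e x) y = (\<Sum>n. w n * inner (e n) x * inner (e n) y)"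
  unfolding Pw_def
  using bounded_linear.suminf[OF bounded_linear_inner_left[of y] Pw_summable[OF e w, where x=x]] by simp

lemma Pw_inner_e:
  fixes e :: "nat \<Rightarrow> 'a::{real_inner, complete_space}"
  assumes e: "ONS e" and w: "\<And>n. \<bar>w n\<bar> \<le> 1"
  shows "inner (Pw w e x) (e m) = w m * inner (e m) x"
proof -
  have "(\<lambda>n. w n * inner (e n) x * inner (e n) (e m)) = (\<lambda>n. if n = m then w m * inner (e m) x else 0)"
  proof
    fix n show "w n * inner (e n) x * inner (e n) (e m) = (if n = m then w m * inner (e m) x else 0)"
      using ONS_inner[OF e, of n m] by (cases "n = m") simp_all
  qed
  hence "(\<lambda>n. w n * inner (e n) x * inner (e n) (e m)) sums (w m * inner (e m) x)"
    using sums_single[of m "\<lambda>_. w m * inner (e m) x"] by simp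
  hence "(\<Sum>n. w n * inner (e n) x * inner (e n) (e m)) = w m * inner (e m) x"
    by (rule sums_unique[symmetric])
  thus ?thesis using Pw_inner[OF e w] by simp
qed

lemma Pw_norm2:
  fixes e :: "nat \<Rightarrow> 'a::{real_inner, complete_space}"
  assumes e: "ONS e" and w: "\<And>n. \<bar>w n\<bar> \<le> 1"
  shows "(norm (Pw w e x))^2 = (\<Sum>n. (w n * inner (e n) x)^2)"
proof -
  have "(norm (Pw w e x))^2 = inner (Pw w e x) (Pw w e x)" by (simp add: power2_norm_eq_inner)
  also have "\<dots> = (\<Sum>n. w n * inner (e n) x * inner (e n) (Pw w e x))" by (rule Pw_inner[OF e w])
  also have "\<dots> = (\<Sum>n. (w n * inner (e n) x)^2)"
  proof -
    have "inner (e n) (Pw w e x) = w n * inner (e n) x" for n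
      by (subst inner_commute) (rule Pw_inner_e[OF e w])
    hence "(\<lambda>n. w n * inner (e n) x * inner (e n) (Pw w e x)) = (\<lambda>n. (w n * inner (e n) x)^2)"
      by (simp add: power2_eq_square)
    thus ?thesis by simp
  qed
  finally show ?thesis .
qed

lemma Pw_linear:
  fixes e :: "nat \<Rightarrow> 'a::{real_inner, complete_space}"
  assumes e: "ONS e" and w: "\<And>n. \<bar>w n\<bar> \<le> 1"
  shows "bounded_linear (Pw w e)"
proof (rule bounded_linear_intro[where K=1])
  fix x y :: 'a and r :: real
  show "Pw w e (x + y) = Pw w e x + Pw w e y"
  proof -
    have "(\<lambda>n. (w n * inner (e n) (x + y)) *\<^sub>R e n) = (\<lambda>n. (w n * inner (e n) x) *\<^sub>R e n + (w n * inner (e n) y) *\<^sub>R e n)"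
      by (simp add: inner_add_right distrib_left scaleR_add_left)
    thus ?thesis unfolding Pw_def using suminf_add[OF Pw_summable[OF e w, where x=x] Pw_summable[OF e w, where x=y]]
      by simp
  qed
  show "Pw w e (r *\<^sub>R x) = r *\<^sub>R Pw w e x"
  proof -
    have "(\<lambda>n. (w n * inner (e n) (r *\<^sub>R x)) *\<^sub>R e n) = (\<lambda>n. r *\<^sub>R ((w n * inner (e n) x) *\<^sub>R e n))"
      by (simp add: mult.left_commute)
    thus ?thesis unfolding Pw_def using suminf_scaleR_right[OF Pw_summable[OF e w, where x=x], of r]
      by simp
  qed
  have "(norm (Pw w e x))^2 \<le> (norm x)^2"
  proof -
    have "(\<Sum>n. (w n * inner (e n) x)^2) \<le> (\<Sum>n. (inner (e n) x)^2)"
    proof (rule suminf_le)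
      fix n
      show "(w n * inner (e n) x)^2 \<le> (inner (e n) x)^2" by (rule sq_le_lemma[OF w[of n]])
    next
      show "summable (\<lambda>n. (inner (e n) x)^2)" by (rule bessel(1)[OF e])
    next
      show "summable (\<lambda>n. (w n * inner (e n) x)^2)"
        by (rule summable_comparison_test'[OF bessel(1)[OF e, where x=x]])
          (use sq_le_lemma[OF w] in simp)
    qed
    thus ?thesis using Pw_norm2[where w=w and x=x, OF e w] bessel(2)[OF e, where x=x] by linarith
  qed
  hence "norm (Pw w e x) \<le> norm x" by (rule power2_le_imp_le) simp
  thus "norm (Pw w e x) \<le> norm x * 1" by simp
qed



lemma ext_step:
  fixes E :: "'a::real_inner set"
  assumes sub: "subspace E" and nf: "\<not> (\<exists>B. finite B \<and> E = span B)"
    and G: "finite G" "G \<subseteq> E"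
  shows "\<exists>u. u \<in> E \<and> norm u = 1 \<and> (\<forall>g\<in>G. inner g u = 0)"
proof -
  obtain F where F: "finite F" "orthonormal F" "span F = span G" using onb_exists[OF G(1)] by blast
  have sFE: "span F \<subseteq> E" using F(3) span_minimal[OF G(2) sub] by simp
  have "span F \<noteq> E" using nf F(1) by blast
  then obtain v where v: "v \<in> E" "v \<notin> span F" using sFE by blast
  define w where "w = v - proj F v"
  have wE: "w \<in> E" unfolding w_def using v(1) proj_in_span sFE sub by (blast intro: subspace_diff)
  have w0: "w \<noteq> 0" using v(2) proj_in_span[of F v] by (auto simp: w_def)
  have orth: "inner g w = 0" if "g \<in> G" for g
  proof -
    have "g \<in> span F" using that F(3) span_superset by blast
    thus ?thesis using proj_orth[OF F(1,2)] by (simp add: w_def inner_commute)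
  qed
  show ?thesis
    by (rule exI[of _ "w /\<^sub>R norm w"]) (use wE w0 orth sub in \<open>auto simp: subspace_scale\<close>)
qed

lemma seqE:
  fixes E :: "'a::real_inner set"
  assumes sub: "subspace E" and nf: "\<not> (\<exists>B. finite B \<and> E = span B)"
  shows "\<exists>e. ONS e \<and> (\<forall>n. e n \<in> E)"
proof -
  define stp where "stp G = (SOME u. u \<in> E \<and> norm u = 1 \<and> (\<forall>g\<in>G. inner g u = 0))" for G
  have stpP: "stp G \<in> E \<and> norm (stp G) = 1 \<and> (\<forall>g\<in>G. inner g (stp G) = 0)" if "finite G" "G \<subseteq> E" for G
    unfolding stp_def by (rule someI_ex[OF ext_step[OF sub nf that]])
  define S where "S = rec_nat {} (\<lambda>n G. insert (stp G) G)"
  have S0: "S 0 = {}" and SS: "S (Suc n) = insert (stp (S n)) (S n)" for n by (simp_all add: S_def)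
  have inv: "finite (S n) \<and> S n \<subseteq> E" for n
  proof (induction n)
    case 0 thus ?case by (simp add: S0)
  next
    case (Suc n) thus ?case using stpP[of "S n"] by (simp add: SS)
  qed
  define e where "e n = stp (S n)" for n
  have eP: "e n \<in> E" "norm (e n) = 1" "\<forall>g\<in>S n. inner g (e n) = 0" for n
    using stpP[of "S n"] inv[of n] by (simp_all add: e_def)
  have mem: "m < n \<Longrightarrow> e m \<in> S n" for m n
  proof (induction n)
    case 0 thus ?case by simp
  next
    case (Suc n) thus ?case by (cases "m = n") (auto simp: SS e_def)
  qed
  have "ONS e"
    unfolding ONS_def
  proof (intro conjI allI impI)
    fix n show "norm (e n) = 1" by (rule eP(2))
  next
    fix m n :: nat assume "m \<noteq> n"
    show "inner (e m) (e n) = 0"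
    proof (cases "m < n")
      case True thus ?thesis using eP(3)[of n] mem by blast
    next
      case False hence "n < m" using \<open>m \<noteq> n\<close> by simp
      thus ?thesis using eP(3)[of m] mem by (metis inner_commute)
    qed
  qed
  thus ?thesis using eP(1) by blast
qed



lemma caseB:
  fixes T :: "'a::{real_inner, complete_space} \<Rightarrow>\<^sub>L 'a"
  assumes T0: "T \<noteq> 0" and eps: "0 \<le> eps" "eps < 1"
    and e: "ONS e" and eE: "\<And>n. e n \<in> Eset T"
  shows "\<exists>A. bj_eps_orth eps T A \<and> \<not> (\<exists>x\<in>norm_attain T. \<bar>inner (T x) (A x)\<bar> \<le> eps * norm T * norm A)"
proof -
  define N where "N = norm T"
  have N0: "N > 0" using T0 by (simp add: N_def)
  define w where "w n = 1 - (1/2::real)^n" for n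
  have w01: "0 \<le> w n" "w n \<le> 1" for n by (simp_all add: w_def power_le_one)
  have wlt: "w n < 1" for n by (simp add: w_def)
  have w: "\<bar>w n\<bar> \<le> 1" for n using w01[of n] by simp
  have wz: "w 0 = 0" by (simp add: w_def)
  define P where "P = Pw w e"
  have blP: "bounded_linear P" unfolding P_def by (rule Pw_linear[OF e w])
  define D where "D z = z - (1 - eps) *\<^sub>R P z" for z
  have blD: "bounded_linear D"
    unfolding D_def by (intro bounded_linear_sub bounded_linear_ident bounded_linear_compose[OF bounded_linear_scaleR_right blP])
  have bl: "bounded_linear (\<lambda>z. T (D z))"
    by (rule bounded_linear_compose[OF blinfun.bounded_linear_right blD])
  define A where "A = Blinfun (\<lambda>z. T (D z))"
  have Aap: "A z = T (D z)" for z using bl by (simp add: A_def bounded_linear_Blinfun_apply)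
  define Sq where "Sq z = (\<Sum>n. w n * (inner (e n) z)^2)" for z
  have sumSq: "summable (\<lambda>n. w n * (inner (e n) z)^2)" for z
  proof (rule summable_comparison_test'[OF bessel(1)[OF e, where x=z]])
    fix n
    have "w n * (inner (e n) z)^2 \<le> 1 * (inner (e n) z)^2" using w01[of n] by (intro mult_right_mono) auto
    thus "norm (w n * (inner (e n) z)^2) \<le> (inner (e n) z)^2" using w01[of n] by simp
  qed
  have iP: "inner z (P z) = Sq z" for z
  proof -
    have "inner z (P z) = (\<Sum>n. w n * inner (e n) z * inner (e n) z)"
      unfolding P_def by (subst inner_commute) (rule Pw_inner[OF e w])
    thus ?thesis by (simp add: Sq_def power2_eq_square mult.assoc)
  qed
  have Sq0: "Sq z \<ge> 0" for z unfolding Sq_def by (rule suminf_nonneg[OF sumSq]) (simp add: w01)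
  have Sq1: "Sq z \<le> (norm z)^2" for z
  proof -
    have "Sq z \<le> (\<Sum>n. (inner (e n) z)^2)" unfolding Sq_def
    proof (rule suminf_le[OF _ sumSq bessel(1)[OF e]])
      fix n
      show "w n * (inner (e n) z)^2 \<le> (inner (e n) z)^2"
        using mult_right_mono[OF w01(2)[of n] zero_le_power2[of "inner (e n) z"]] by simp
    qed
    thus ?thesis using bessel(2)[OF e, where x=z] by linarith
  qed
  have nP: "(norm (P z))^2 \<le> Sq z" for z
  proof -
    have "(norm (P z))^2 = (\<Sum>n. (w n * inner (e n) z)^2)" unfolding P_def by (rule Pw_norm2[OF e w])
    also have "\<dots> \<le> Sq z" unfolding Sq_def
    proof (rule suminf_le)
      fix n
      have "(w n)^2 \<le> w n" using w01[of n] by (simp add: power2_eq_square mult_left_le)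
      thus "(w n * inner (e n) z)^2 \<le> w n * (inner (e n) z)^2"
        using mult_right_mono[of "(w n)^2" "w n" "(inner (e n) z)^2"] by (simp add: power_mult_distrib)
    next
      show "summable (\<lambda>n. w n * (inner (e n) z)^2)" by (rule sumSq)
    next
      show "summable (\<lambda>n. (w n * inner (e n) z)^2)"
        by (rule summable_comparison_test'[OF bessel(1)[OF e, where x=z]]) (use sq_le_lemma[OF w] in simp)
    qed
    finally show ?thesis .
  qed
  have nD: "norm (D z) \<le> norm z" for z
  proof -
    have "(norm (D z))^2 = (norm z)^2 + 2 * (-(1 - eps)) * inner z (P z) + (-(1 - eps))^2 * (norm (P z))^2"
    proof -
      have "D z = z + (-(1 - eps)) *\<^sub>R P z" unfolding D_def scaleR_minus_left by simp
      thus ?thesis using norm_add_sq[of z "-(1 - eps)" "P z"] by simp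
    qed
    also have "\<dots> = (norm z)^2 - 2 * (1 - eps) * Sq z + (1 - eps)^2 * (norm (P z))^2"
      by (simp add: iP power2_eq_square algebra_simps)
    also have "\<dots> \<le> (norm z)^2 - 2 * (1 - eps) * Sq z + (1 - eps)^2 * Sq z"
      using nP[of z] by (simp add: mult_left_mono)
    also have "\<dots> \<le> (norm z)^2"
    proof -
      have "(1 - eps) * (1 - eps) \<le> 1 * (1 - eps)" using eps by (intro mult_right_mono) auto
      moreover have "1 * (1 - eps) \<le> 2 * (1 - eps)" using eps by simp
      ultimately have "(1 - eps)^2 \<le> 2 * (1 - eps)" unfolding power2_eq_square by (rule order_trans)
      hence "(1 - eps)^2 * Sq z \<le> 2 * (1 - eps) * Sq z" using Sq0[of z] by (simp add: mult_right_mono)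
      thus ?thesis by simp
    qed
    finally show ?thesis using power2_le_imp_le by force
  qed
  have nA: "norm A \<le> N"
  proof (rule norm_blinfun_bound)
    fix z
    have "norm (A z) \<le> N * norm (D z)" unfolding Aap N_def by (rule norm_blinfun)
    also have "\<dots> \<le> N * norm z" using nD N0 by (simp add: mult_left_mono)
    finally show "norm (A z) \<le> N * norm z" .
  qed (use N0 in simp)
  have Pe: "P (e k) = w k *\<^sub>R e k" for k
  proof -
    have "(\<lambda>n. (w n * inner (e n) (e k)) *\<^sub>R e n) = (\<lambda>n. if n = k then w k *\<^sub>R e k else 0)"
    proof
      fix n show "(w n * inner (e n) (e k)) *\<^sub>R e n = (if n = k then w k *\<^sub>R e k else 0)"
        using ONS_inner[OF e, of n k] by (cases "n = k") simp_all
    qed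
    hence "(\<lambda>n. (w n * inner (e n) (e k)) *\<^sub>R e n) sums (w k *\<^sub>R e k)"
      using sums_single[of k "\<lambda>_. w k *\<^sub>R e k"] by simp
    thus ?thesis unfolding P_def Pw_def by (rule sums_unique[symmetric])
  qed
  have nTe: "norm (T (e k)) = N" for k
    using Eset_norm[OF eE[of k]] e by (simp add: ONS_def N_def)
  have Ae: "A (e k) = (1 - (1 - eps) * w k) *\<^sub>R T (e k)" for k
  proof -
    have "D (e k) = (1 - (1 - eps) * w k) *\<^sub>R e k"
      by (simp add: D_def Pe scaleR_diff_left)
    thus ?thesis by (simp add: Aap blinfun.scaleR_right)
  qed
  have nA2: "norm A \<ge> N"
  proof -
    have "A (e 0) = T (e 0)" using Ae[of 0] wz by simp
    hence "norm (A (e 0)) = N" using nTe by simp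
    moreover have "norm (A (e 0)) \<le> norm A * norm (e 0)" by (rule norm_blinfun)
    ultimately show ?thesis using e by (simp add: ONS_def)
  qed
  have nAN: "norm A = N" using nA nA2 by simp
  have bj: "bj_eps_orth eps T A"
    unfolding bj_eps_orth_def
  proof
    fix l :: real
    define f where "f k = (1 + l * (1 - (1 - eps) * (1 - (1/2::real)^k)))^2 * N^2" for k
    have bnd: "f k \<le> (norm (T + l *\<^sub>R A))^2" for k
    proof -
      have "(T + l *\<^sub>R A) (e k) = (1 + l * (1 - (1 - eps) * w k)) *\<^sub>R T (e k)"
        by (simp add: blinfun.add_left blinfun.scaleR_left Ae algebra_simps)
      hence "norm ((T + l *\<^sub>R A) (e k)) = \<bar>1 + l * (1 - (1 - eps) * w k)\<bar> * N"
        using nTe by simp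
      moreover have "norm ((T + l *\<^sub>R A) (e k)) \<le> norm (T + l *\<^sub>R A)"
        using norm_blinfun[of "T + l *\<^sub>R A" "e k"] e by (simp add: ONS_def)
      ultimately have "\<bar>1 + l * (1 - (1 - eps) * w k)\<bar> * N \<le> norm (T + l *\<^sub>R A)" by simp
      hence "(\<bar>1 + l * (1 - (1 - eps) * w k)\<bar> * N)^2 \<le> (norm (T + l *\<^sub>R A))^2"
        using N0 by (intro power_mono) auto
      thus ?thesis by (simp add: f_def w_def power_mult_distrib)
    qed
    have "f \<longlonglongrightarrow> (1 + l * (1 - (1 - eps) * (1 - 0)))^2 * N^2"
      unfolding f_def by (intro tendsto_intros LIMSEQ_realpow_zero) auto
    hence lim: "(1 + l * eps)^2 * N^2 \<le> (norm (T + l *\<^sub>R A))^2"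
      using bnd by (intro LIMSEQ_le_const2[of f]) auto
    have "(1 + l * eps)^2 \<ge> 1 - 2 * (\<bar>l\<bar> * eps)"
    proof -
      have "(1 + l * eps)^2 = 1 + 2 * (l * eps) + (l * eps)^2" by (simp add: power2_eq_square algebra_simps)
      moreover have "l * eps \<ge> - (\<bar>l\<bar> * eps)" using mult_right_mono[of "-\<bar>l\<bar>" l eps] eps by simp
      moreover have "(l * eps)^2 \<ge> 0" by simp
      ultimately show ?thesis by linarith
    qed
    hence "(1 - 2 * (\<bar>l\<bar> * eps)) * N^2 \<le> (1 + l * eps)^2 * N^2" by (simp add: mult_right_mono)
    moreover have "(norm T)\<^sup>2 - 2 * eps * norm T * norm (l *\<^sub>R A) = (1 - 2 * (\<bar>l\<bar> * eps)) * N^2"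
      by (simp add: nAN N_def power2_eq_square algebra_simps)
    ultimately show "(norm T)\<^sup>2 - 2 * eps * norm T * norm (l *\<^sub>R A) \<le> (norm (T + l *\<^sub>R A))\<^sup>2"
      using lim by linarith
  qed
  have nx: "\<not> (\<exists>x\<in>norm_attain T. \<bar>inner (T x) (A x)\<bar> \<le> eps * norm T * norm A)"
  proof
    assume "\<exists>x\<in>norm_attain T. \<bar>inner (T x) (A x)\<bar> \<le> eps * norm T * norm A"
    then obtain x where x: "x \<in> norm_attain T" "\<bar>inner (T x) (A x)\<bar> \<le> eps * norm T * norm A" by blast
    have x1: "norm x = 1" using x(1) by (simp add: norm_attain_def)
    have Sx: "Sq x < 1"
    proof (rule ccontr)
      assume "\<not> Sq x < 1"
      hence ge: "Sq x \<ge> 1" by simp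
      have sa: "summable (\<lambda>n. (inner (e n) x)^2)" by (rule bessel(1)[OF e])
      have "(\<Sum>n. (inner (e n) x)^2) - Sq x = (\<Sum>n. (inner (e n) x)^2 - w n * (inner (e n) x)^2)"
        unfolding Sq_def by (rule suminf_diff[OF sa sumSq])
      moreover have "(\<Sum>n. (inner (e n) x)^2) \<le> 1" using bessel(2)[OF e, where x=x] x1 by simp
      ultimately have le0: "(\<Sum>n. (inner (e n) x)^2 - w n * (inner (e n) x)^2) \<le> 0" using ge by linarith
      have nn: "\<And>n. 0 \<le> (inner (e n) x)^2 - w n * (inner (e n) x)^2"
        using w01 by (simp add: mult_left_le_one_le)
      have sd: "summable (\<lambda>n. (inner (e n) x)^2 - w n * (inner (e n) x)^2)" by (rule summable_diff[OF sa sumSq])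
      have "(\<Sum>n. (inner (e n) x)^2 - w n * (inner (e n) x)^2) = 0"
        using le0 suminf_nonneg[OF sd nn] by linarith
      hence z: "\<forall>n. (inner (e n) x)^2 - w n * (inner (e n) x)^2 = 0"
        using suminf_eq_zero_iff[OF sd nn] by blast
      have "inner (e n) x = 0" for n
      proof -
        have "(1 - w n) * (inner (e n) x)^2 = 0" using z[rule_format, of n] by (simp add: algebra_simps)
        thus ?thesis using wlt[of n] by simp
      qed
      hence "Sq x = 0" by (simp add: Sq_def)
      thus False using ge by simp
    qed
    have xE: "x \<in> Eset T" using x(1) attain_Eset by (auto simp: unit_sphere_of_def)
    have "inner (T x) (A x) = N^2 * inner x (D x)"
      unfolding Aap using key_attain[OF x(1)] by (simp add: N_def)
    also have "inner x (D x) = 1 - (1 - eps) * Sq x"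
      using x1 by (simp add: D_def inner_diff_right iP power2_norm_eq_inner[symmetric])
    finally have gx: "inner (T x) (A x) = N^2 * (1 - (1 - eps) * Sq x)" .
    have "(1 - eps) * Sq x < (1 - eps)" using Sx eps by simp
    hence "eps < 1 - (1 - eps) * Sq x" by simp
    hence "N^2 * eps < N^2 * (1 - (1 - eps) * Sq x)" using N0 by simp
    moreover have "eps * norm T * norm A = N^2 * eps" using nAN by (simp add: N_def power2_eq_square)
    ultimately have "eps * norm T * norm A < inner (T x) (A x)" using gx by linarith
    thus False using x(2) by linarith
  qed
  show ?thesis using bj nx by blast
qed



theorem mainTheorem3:
  fixes T :: "'a::{real_inner, complete_space} \<Rightarrow>\<^sub>L 'a" and eps :: real
  assumes "T \<noteq> 0" and "0 \<le> eps" and "eps < 1"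
  shows "((\<forall>A :: 'a \<Rightarrow>\<^sub>L 'a. bj_eps_orth eps T A \<longleftrightarrow>
             (\<exists>x \<in> norm_attain T. \<bar>inner (blinfun_apply T x) (blinfun_apply A x)\<bar> \<le> eps * norm T * norm A))
          \<longleftrightarrow>
          (\<exists>H0. fin_dim_subspace H0 \<and> norm_attain T = unit_sphere_of H0 \<and>
                restr_norm T (orthogonal_comp H0) < norm T))
       \<and>
       ((\<exists>H0. fin_dim_subspace H0 \<and> norm_attain T = unit_sphere_of H0 \<and>
                restr_norm T (orthogonal_comp H0) < norm T) \<longrightarrow>
          (\<forall>A :: 'a \<Rightarrow>\<^sub>L 'a. norm_attain T \<subseteq> norm_attain A \<longrightarrow>
             (bj_eps_orth eps T A \<longleftrightarrow>
              (\<exists>x \<in> norm_attain T. inner_eps_orth eps (blinfun_apply T x) (blinfun_apply A x)))))"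
proof -
  note T0 = assms(1) and eps0 = assms(2) and eps1 = assms(3)
  let ?C1 = "\<forall>A :: 'a \<Rightarrow>\<^sub>L 'a. bj_eps_orth eps T A \<longleftrightarrow>
             (\<exists>x \<in> norm_attain T. \<bar>inner (blinfun_apply T x) (blinfun_apply A x)\<bar> \<le> eps * norm T * norm A)"
  let ?C2 = "\<exists>H0. fin_dim_subspace H0 \<and> norm_attain T = unit_sphere_of H0 \<and>
                restr_norm T (orthogonal_comp H0) < norm T"
  have c21: ?C1 if c2: ?C2
  proof
    fix A :: "'a \<Rightarrow>\<^sub>L 'a"
    obtain H0 where H0: "fin_dim_subspace H0" "norm_attain T = unit_sphere_of H0"
      "restr_norm T (orthogonal_comp H0) < norm T" using c2 by blast
    show "bj_eps_orth eps T A \<longleftrightarrow>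
             (\<exists>x \<in> norm_attain T. \<bar>inner (T x) (A x)\<bar> \<le> eps * norm T * norm A)"
      using dir21[OF T0 eps0 H0] bj_from_x by blast
  qed
  have c12: ?C2 if c1: ?C1
  proof -
    define E where "E = Eset T"
    have sub: "subspace E" unfolding E_def by (rule subspace_Eset)
    have fin: "\<exists>B. finite B \<and> E = span B"
    proof (rule ccontr)
      assume nf: "\<not> (\<exists>B. finite B \<and> E = span B)"
      obtain e where e: "ONS e" "\<forall>n. e n \<in> E" using seqE[OF sub nf] by blast
      obtain A where "bj_eps_orth eps T A"
        "\<not> (\<exists>x\<in>norm_attain T. \<bar>inner (T x) (A x)\<bar> \<le> eps * norm T * norm A)"
        using caseB[OF T0 eps0 eps1 e(1)] e(2) by (auto simp: E_def)
      thus False using c1 by blast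
    qed
    then obtain B where B: "finite B" "E = span B" by blast
    obtain F where F: "finite F" "orthonormal F" "span F = span B" using onb_exists[OF B(1)] by blast
    have EF: "Eset T = span F" using B F by (simp add: E_def)
    have r: "restr_norm T (orthogonal_comp E) < norm T"
    proof (rule ccontr)
      assume "\<not> restr_norm T (orthogonal_comp E) < norm T"
      hence "\<not> restr_norm T (orthogonal_comp (span F)) < norm T" using EF by (simp add: E_def)
      then obtain A where "bj_eps_orth eps T A"
        "\<not> (\<exists>x\<in>norm_attain T. \<bar>inner (T x) (A x)\<bar> \<le> eps * norm T * norm A)"
        using caseA[OF T0 eps0 eps1 F(1) F(2) EF] by blast
      thus False using c1 by blast
    qed
    have "fin_dim_subspace E" using sub B by (auto simp: fin_dim_subspace_def)
    moreover have "norm_attain T = unit_sphere_of E" by (simp add: E_def attain_Eset)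
    ultimately show ?thesis using r by blast
  qed
  have part2: "\<forall>A :: 'a \<Rightarrow>\<^sub>L 'a. norm_attain T \<subseteq> norm_attain A \<longrightarrow>
             (bj_eps_orth eps T A \<longleftrightarrow>
              (\<exists>x \<in> norm_attain T. inner_eps_orth eps (T x) (A x)))" if c2: ?C2
  proof (intro allI impI)
    fix A :: "'a \<Rightarrow>\<^sub>L 'a"
    assume sub: "norm_attain T \<subseteq> norm_attain A"
    have eq: "inner_eps_orth eps (T x) (A x) \<longleftrightarrow> \<bar>inner (T x) (A x)\<bar> \<le> eps * norm T * norm A"
      if "x \<in> norm_attain T" for x
    proof -
      have "norm (T x) = norm T" using that by (simp add: norm_attain_def)
      moreover have "norm (A x) = norm A" using that sub by (auto simp: norm_attain_def)
      ultimately show ?thesis by (simp add: inner_eps_orth_def)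
    qed
    show "bj_eps_orth eps T A \<longleftrightarrow> (\<exists>x \<in> norm_attain T. inner_eps_orth eps (T x) (A x))"
      using c21[OF c2] eq by blast
  qed
  show ?thesis using c21 c12 part2 by blast
qed


end
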